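(* Let $f:\{1,\dots,n\}\to\{0,1\}$, let $S=\{i: f(i)=1\}$, and let $T=f(1)f(2)\cdots f(n)$ be the corresponding binary string. Then the number $z$ of factors in the LZ77 factorization of $T$ satisfies $z\le 3|S|+2$.
   Context: LZ77 factorization (greedy): start with $i=1$; while $i\le n$: if $T[i]$ is the first occurrence of its symbol, $T[i]$ is the next factor and $i\gets i+1$; otherwise take the largest $j\ge i$ such that $T[i..j]$ occurs in $T$ starting at some position $i'<i$ (overlap allowed), make $T[i..j]$ the next factor and set $i\gets j+1$. $z$ is the number of factors. *)

theory Defs
  imports Main
begin

text \<open>Strings are lists, positions are 0-indexed (position i here = position i+1 in the paper).
  T[i..i+l-1] occurs in T starting at some earlier position i' < i (overlap allowed).\<close>

definition occurs_earlier :: "'a list \<Rightarrow> nat \<Rightarrow> nat \<Rightarrow> bool" where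
  "occurs_earlier T i l \<longleftrightarrow> i + l \<le> length T \<and>
     (\<exists>i' < i. \<forall>k < l. T ! (i' + k) = T ! (i + k))"

definition lz_factor_len :: "'a list \<Rightarrow> nat \<Rightarrow> nat" where
  "lz_factor_len T i =
     (if T ! i \<notin> set (take i T) then 1
      else Greatest (\<lambda>l. l \<ge> 1 \<and> occurs_earlier T i l))"

function lz_count :: "'a list \<Rightarrow> nat \<Rightarrow> nat" where
  "lz_count T i =
     (if i < length T then Suc (lz_count T (i + max 1 (lz_factor_len T i))) else 0)"
  by auto
termination
  by (relation "measure (\<lambda>(T, i). length T - i)") auto

definition lz77_z :: "'a list \<Rightarrow> nat" where
  "lz77_z T = lz_count T 0"

end

theory Submission
  imports Defs
begin

definition ones :: "nat list \<Rightarrow> nat \<Rightarrow> nat" where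
  "ones T i = card {q. i \<le> q \<and> q < length T \<and> T ! q = 1}"

definition BB :: "nat list \<Rightarrow> nat \<Rightarrow> nat" where
  "BB T i = (if length T \<le> i then 0 else if T ! i = 1 then 3 * ones T i
     else if 0 < i \<and> T ! (i - 1) = 0 then 3 * ones T i + 1 else 3 * ones T i + 2)"

lemma ones_mono: "i \<le> j \<Longrightarrow> ones T j \<le> ones T i"
  unfolding ones_def by (rule card_mono) auto

lemma ones_strict:
  assumes "i \<le> q" "q < j" "q < length T" "T ! q = 1"
  shows "ones T j < ones T i"
proof -
  let ?A = "{q. i \<le> q \<and> q < length T \<and> T ! q = 1}"
  let ?B = "{q. j \<le> q \<and> q < length T \<and> T ! q = 1}"
  have sub: "?B \<subseteq> ?A" using assms(1,2) by auto
  have "q \<in> ?A" "q \<notin> ?B" using assms by auto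
  then have "?B \<subset> ?A" using sub by blast
  moreover have "finite ?A" by simp
  ultimately show ?thesis unfolding ones_def by (rule psubset_card_mono[rotated])
qed

lemma ones_eq: "i \<le> j \<Longrightarrow> (\<forall>q. i \<le> q \<and> q < j \<and> q < length T \<longrightarrow> T ! q \<noteq> 1) \<Longrightarrow> ones T j = ones T i"
proof -
  assume a: "i \<le> j" and b: "\<forall>q. i \<le> q \<and> q < j \<and> q < length T \<longrightarrow> T ! q \<noteq> 1"
  have "{q. j \<le> q \<and> q < length T \<and> T ! q = 1} = {q. i \<le> q \<and> q < length T \<and> T ! q = 1}"
  proof (rule set_eqI)
    fix q
    show "q \<in> {q. j \<le> q \<and> q < length T \<and> T ! q = 1} \<longleftrightarrow> q \<in> {q. i \<le> q \<and> q < length T \<and> T ! q = 1}"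
      using a b[rule_format, of q] by (cases "q < j") auto
  qed
  then show ?thesis unfolding ones_def by simp
qed

lemma ones_pos: "i < length T \<Longrightarrow> T ! i = 1 \<Longrightarrow> 1 \<le> ones T i"
  using ones_strict[of i i "Suc i" T] by simp

lemma BB_le: "BB T i \<le> 3 * ones T i + 2"
  unfolding BB_def by auto

lemma BB_ge: "i < length T \<Longrightarrow> 3 * ones T i \<le> BB T i"
  unfolding BB_def by auto

lemma greatest_bound:
  assumes "occurs_earlier T i l \<and> 1 \<le> l"
  shows "l \<le> Greatest (\<lambda>l. l \<ge> 1 \<and> occurs_earlier T i l)"
  apply (rule Greatest_le_nat[of _ _ "length T"])
  using assms apply simp
  apply (auto simp: occurs_earlier_def)
  done

lemma step:
  assumes bin: "\<forall>x\<in>set T. x = 0 \<or> x = 1" and i: "i < length T"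
  defines "j \<equiv> i + max 1 (lz_factor_len T i)"
  shows "BB T j < BB T i"
proof (cases "\<exists>q. i \<le> q \<and> q < j \<and> q < length T \<and> T ! q = 1")
  case True
  then obtain q where q: "i \<le> q" "q < j" "q < length T" "T ! q = 1" by blast
  have "ones T j < ones T i" using ones_strict[OF q] .
  then show ?thesis using BB_le[of T j] BB_ge[OF i] by linarith
next
  case False
  have bin': "\<And>q. q < length T \<Longrightarrow> T ! q \<noteq> 1 \<Longrightarrow> T ! q = 0"
    using bin by (metis nth_mem)
  have ij: "i < j" unfolding j_def by simp
  have Ti: "T ! i = 0" using False bin' i ij by blast
  show ?thesis
  proof (cases "length T \<le> j")
    case True
    then show ?thesis using i Ti by (simp add: BB_def)
  next
    case jl: False
    have oe: "ones T j = ones T i" using ones_eq[of i j T] False ij by auto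
    have Tj1: "T ! (j - 1) = 0"
    proof -
      have "i \<le> j - 1" "j - 1 < j" "j - 1 < length T" using ij jl by auto
      then show ?thesis using False bin' by blast
    qed
    show ?thesis
    proof (cases "T ! j = 1")
      case True
      then show ?thesis using jl i Ti oe by (simp add: BB_def)
    next
      case Tj: False
      have Tj0: "T ! j = 0" using bin' Tj jl by simp
      have "\<not> (0 < i \<and> T ! (i - 1) = 0)"
      proof
        assume h: "0 < i \<and> T ! (i - 1) = 0"
        let ?P = "\<lambda>l. l \<ge> 1 \<and> occurs_earlier T i l"
        have mem: "T ! i \<in> set (take i T)"
          using h Ti i by (metis diff_less in_set_conv_nth length_take less_one min.absorb4
              nth_take order.strict_trans)
        then have fl: "lz_factor_len T i = Greatest ?P" by (simp add: lz_factor_len_def)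
        have P1: "?P 1" using h Ti i unfolding occurs_earlier_def
          by (intro conjI) (auto intro!: exI[of _ "i - 1"])
        have G1: "1 \<le> Greatest ?P" using greatest_bound[of T i 1] P1 by simp
        then have jG: "j = i + Greatest ?P" unfolding j_def fl by simp
        have z: "\<And>p. i \<le> p \<Longrightarrow> p \<le> j \<Longrightarrow> T ! p = 0"
        proof -
          fix p assume "i \<le> p" "p \<le> j"
          then show "T ! p = 0"
            using False bin' jl Tj0 by (cases "p = j") auto
        qed
        have len: "i + (Greatest ?P + 1) \<le> length T" using jl jG by simp
        have lt: "i - 1 < i" using h by simp
        have eq: "\<forall>k<Greatest ?P + 1. T ! (i - 1 + k) = T ! (i + k)"
        proof (intro allI impI)
          fix k assume k: "k < Greatest ?P + 1"
          show "T ! (i - 1 + k) = T ! (i + k)"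
          proof (cases k)
            case 0 then show ?thesis using h Ti by simp
          next
            case (Suc k')
            then have "i - 1 + k = i + k'" using h by simp
            have a: "T ! (i + k') = 0" by (rule z) (use k jG Suc in auto)
            have b: "T ! (i + k) = 0" by (rule z) (use k jG Suc in auto)
            show ?thesis using a b \<open>i - 1 + k = i + k'\<close> by simp
          qed
        qed
        have "occurs_earlier T i (Greatest ?P + 1)"
          unfolding occurs_earlier_def[of T i "Greatest ?P + 1"] using len lt eq by blast
        then have "Greatest ?P + 1 \<le> Greatest ?P" using greatest_bound[of T i] by simp
        then show False by simp
      qed
      then show ?thesis using jl i Ti Tj oe Tj1 ij by (simp add: BB_def)
    qed
  qed
qed

lemma main:
  assumes bin: "\<forall>x\<in>set T. x = 0 \<or> x = 1"
  shows "lz_count T i \<le> BB T i"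
  using bin
proof (induction T i rule: lz_count.induct)
  case (1 T i)
  show ?case
  proof (cases "i < length T")
    case True
    have "lz_count T i = Suc (lz_count T (i + max 1 (lz_factor_len T i)))"
      using True by simp
    also have "\<dots> \<le> Suc (BB T (i + max 1 (lz_factor_len T i)))"
      using 1 True by simp
    also have "\<dots> \<le> BB T i" using step[OF "1.prems" True] by simp
    finally show ?thesis .
  next
    case False
    then show ?thesis by simp
  qed
qed

theorem lemma11:
  fixes n :: nat and f :: "nat \<Rightarrow> nat"
  assumes "\<forall>i \<in> {1..n}. f i \<in> {0, 1}"
  defines "S \<equiv> {i \<in> {1..n}. f i = 1}"
  defines "T \<equiv> map f [1..<n+1]"
  shows "lz77_z T \<le> 3 * card S + 2"
proof -
  have bin: "\<forall>x\<in>set T. x = 0 \<or> x = 1" using assms(1) unfolding T_def by auto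
  have "ones T 0 = card S"
  proof -
    have "{q. 0 \<le> q \<and> q < length T \<and> T ! q = 1} = (\<lambda>i. i - 1) ` S"
    proof (rule set_eqI, rule iffI)
      fix q assume "q \<in> {q. 0 \<le> q \<and> q < length T \<and> T ! q = 1}"
      then have "Suc q \<in> S" unfolding S_def T_def by (auto simp del: upt_Suc)
      then show "q \<in> (\<lambda>i. i - 1) ` S" by force
    next
      fix q assume "q \<in> (\<lambda>i. i - 1) ` S"
      then obtain i where "i \<in> S" "q = i - 1" by blast
      then show "q \<in> {q. 0 \<le> q \<and> q < length T \<and> T ! q = 1}"
        unfolding S_def T_def by (auto simp del: upt_Suc)
    qed
    moreover have "inj_on (\<lambda>i. i - 1) S" unfolding S_def inj_on_def by auto
    ultimately show ?thesis unfolding ones_def by (simp add: card_image)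
  qed
  then show ?thesis using main[OF bin, of 0] BB_le[of T 0] unfolding lz77_z_def by simp
qed

end
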